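(* Let $\mathcal F=\{F^c_{t,k}\}$ be an F-system and $R,\lambda$ reals such that $|F^A_t\cup F^B_t|\le Rt+\lambda$ for every positive integer $t$. Then for every positive integer $t$, $|S_t|\ge(2-R)t-\lambda$.
   Context: F-system: a family $\mathcal F=\{F^c_{t,k}\}$ of sets of positive integers, indexed by $c\in\{A,B\}$ and integers $0<k\le t$, such that (F1) $|F^c_{t,k}|\ge k$ for all $c,t,k$; and (F2) $F^A_{t,k}\cap F^B_{t',k'}=\emptyset$ for all $k\le t$, $k'\le t'$ with $k+k'\le\max(t,t')$. Notation: $F^c_t=\bigcup_{0<\kappa\le\tau\le t}F^c_{\tau,\kappa}$ for $c\in\{A,B\}$, and $S_t=F^A_t\cap F^B_t$. *)

theory Defs
  imports Complex_Main
begin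

text \<open>An F-system: F c t k for c in {A,B} (A = True, B = False) and 0 < k <= t,
  sets of positive integers. Only the values with 0 < k <= t matter.\<close>

type_synonym fsys = "bool \<Rightarrow> nat \<Rightarrow> nat \<Rightarrow> nat set"

definition F_system :: "fsys \<Rightarrow> bool" where
  "F_system F \<longleftrightarrow>
     (\<forall>c t k. 0 < k \<and> k \<le> t \<longrightarrow> F c t k \<subseteq> {0<..}) \<and>
     (\<forall>c t k. 0 < k \<and> k \<le> t \<longrightarrow> (\<exists>Y. Y \<subseteq> F c t k \<and> finite Y \<and> card Y = k)) \<and>
     (\<forall>t k t' k'. 0 < k \<and> k \<le> t \<and> 0 < k' \<and> k' \<le> t' \<and> k + k' \<le> max t t'
        \<longrightarrow> F True t k \<inter> F False t' k' = {})"

definition Fu :: "fsys \<Rightarrow> bool \<Rightarrow> nat \<Rightarrow> nat set" where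
  "Fu F c t = (\<Union>\<tau>\<in>{1..t}. \<Union>\<kappa>\<in>{1..\<tau>}. F c \<tau> \<kappa>)"

definition St :: "fsys \<Rightarrow> nat \<Rightarrow> nat set" where
  "St F t = Fu F True t \<inter> Fu F False t"

end

theory Submission
  imports Defs
begin

lemma Fu_big:
  assumes "F_system F" "0 < t" "finite (Fu F c t)"
  shows "t \<le> card (Fu F c t)"
proof -
  obtain Y where Y: "Y \<subseteq> F c t t" "finite Y" "card Y = t"
    using assms(1,2) unfolding F_system_def by blast
  have "F c t t \<subseteq> Fu F c t" unfolding Fu_def using assms(2) by force
  then show ?thesis using Y card_mono[OF assms(3)] by fastforce
qed

theorem lemma2:
  fixes F :: fsys and R lam :: real
  assumes "F_system F"
    and "\<And>t. 0 < t \<Longrightarrow> finite (Fu F True t \<union> Fu F False t)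
                 \<and> real (card (Fu F True t \<union> Fu F False t)) \<le> R * real t + lam"
  shows "\<forall>t. 0 < t \<longrightarrow> real (card (St F t)) \<ge> (2 - R) * real t - lam"
proof (intro allI impI)
  fix t :: nat assume t: "0 < t"
  from assms(2)[OF t] have fin: "finite (Fu F True t \<union> Fu F False t)"
    and b: "real (card (Fu F True t \<union> Fu F False t)) \<le> R * real t + lam" by auto
  have fA: "finite (Fu F True t)" and fB: "finite (Fu F False t)" using fin by auto
  have cA: "t \<le> card (Fu F True t)" using Fu_big[OF assms(1) t fA] .
  have cB: "t \<le> card (Fu F False t)" using Fu_big[OF assms(1) t fB] .
  have e: "card (Fu F True t) + card (Fu F False t) = card (Fu F True t \<union> Fu F False t) + card (St F t)"
    unfolding St_def by (rule card_Un_Int[OF fA fB])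
  hence "real (card (Fu F True t)) + real (card (Fu F False t)) = real (card (Fu F True t \<union> Fu F False t)) + real (card (St F t))"
    by (metis of_nat_add)
  moreover have "real t \<le> real (card (Fu F True t))" "real t \<le> real (card (Fu F False t))" using cA cB by auto
  ultimately show "real (card (St F t)) \<ge> (2 - R) * real t - lam" using b by (simp add: algebra_simps)
qed

end
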